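(* (Necessity of a threshold.) Let $\phi:[0,\infty)\to[0,\infty)$ be bounded, with $\phi(h)\ge1$ for $0\le h\le4$ (so $D_\phi\ge4$) and $\phi(h)=0$ for $h>8$. Consider the Cucker–Smale system on $\mathbb R$ with $N=2$, initial data $x_1(0)=-1$, $x_2(0)=1$, $v_1(0)=-1$, $v_2(0)=1$. If $\kappa\le\frac{1}{8\int_0^\infty\phi(h)\,dh}$, then $x_2(t)-x_1(t)\to\infty$ as $t\to\infty$; in fact after some finite time $x_2-x_1>8$ and from then on both particles move with constant, distinct velocities, so no flocking occurs.
   Context: The Cucker–Smale system: $\dot x_i=v_i$, $\dot v_i=\frac{\kappa}{N}\sum_{j=1}^N\phi(|x_i-x_j|)(v_j-v_i)$, $i=1,\dots,N$, with amplitude $\kappa>0$. *)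

theory Defs
  imports "HOL-Analysis.Analysis"
begin

definition cs_solution ::
  "real \<Rightarrow> (real \<Rightarrow> real) \<Rightarrow> nat \<Rightarrow> (nat \<Rightarrow> real \<Rightarrow> real) \<Rightarrow> (nat \<Rightarrow> real \<Rightarrow> real) \<Rightarrow> bool"
where
  "cs_solution kappa phi N x v \<longleftrightarrow>
     (\<forall>i\<in>{1..N}. \<forall>t\<ge>0.
        (x i has_real_derivative v i t) (at t within {0..}) \<and>
        (v i has_real_derivative
            (kappa / real N) * (\<Sum>j\<in>{1..N}. phi \<bar>x i t - x j t\<bar> * (v j t - v i t)))
          (at t within {0..}))"

end

theory Submission
imports Defs
begin

lemma deriv_helper:
  fixes f f' :: "real \<Rightarrow> real"
  assumes "0 \<le> a" "a \<le> b" "\<And>s. s \<in> {a..b} \<Longrightarrow> (f has_real_derivative f' s) (at s within {0..})"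
  shows "continuous_on {a..b} f" and "\<And>s. a < s \<Longrightarrow> s < b \<Longrightarrow> (f has_real_derivative f' s) (at s)"
proof -
  have sub: "{a..b} \<subseteq> {0..}" using assms(1) by auto
  have d: "\<And>s. s \<in> {a..b} \<Longrightarrow> (f has_real_derivative f' s) (at s within {a..b})"
    using assms(3) DERIV_subset sub by blast
  show "continuous_on {a..b} f"
    using d by (meson DERIV_continuous continuous_on_eq_continuous_within)
  fix s assume "a < s" "s < b"
  then show "(f has_real_derivative f' s) (at s)"
    using d[of s] at_within_Icc_at[of a s b] by auto
qed

lemma mono_helper:
  fixes f f' :: "real \<Rightarrow> real"
  assumes "0 \<le> a" "a \<le> b" "\<And>s. s \<in> {a..b} \<Longrightarrow> (f has_real_derivative f' s) (at s within {0..})"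
    and "\<And>s. a < s \<Longrightarrow> s < b \<Longrightarrow> f' s \<ge> 0"
  shows "f a \<le> f b"
proof (rule DERIV_nonneg_imp_increasing_open[OF assms(2)])
  show "continuous_on {a..b} f" using deriv_helper(1)[OF assms(1-3)] .
  fix s assume as: "a < s" "s < b"
  show "\<exists>y. (f has_real_derivative y) (at s) \<and> 0 \<le> y"
  proof (intro exI conjI)
    show "(f has_real_derivative f' s) (at s)" using deriv_helper(2)[OF assms(1-3) as] .
    show "0 \<le> f' s" using assms(4)[OF as] .
  qed
qed

lemma smono_helper:
  fixes f f' :: "real \<Rightarrow> real"
  assumes "0 \<le> a" "a < b" "\<And>s. s \<in> {a..b} \<Longrightarrow> (f has_real_derivative f' s) (at s within {0..})"
    and "\<And>s. a < s \<Longrightarrow> s < b \<Longrightarrow> f' s > 0"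
  shows "f a < f b"
proof (rule DERIV_pos_imp_increasing_open[OF assms(2)])
  have ab: "a \<le> b" using assms(2) by simp
  show "continuous_on {a..b} f" using deriv_helper(1)[OF assms(1) ab assms(3)] .
  fix s assume as: "a < s" "s < b"
  show "\<exists>y. (f has_real_derivative y) (at s) \<and> 0 < y"
  proof (intro exI conjI)
    show "(f has_real_derivative f' s) (at s)" using deriv_helper(2)[OF assms(1) ab assms(3) as] .
    show "0 < f' s" using assms(4)[OF as] .
  qed
qed

lemma const_helper:
  fixes f :: "real \<Rightarrow> real"
  assumes "0 \<le> a" "a \<le> b" "\<And>s. s \<in> {a..b} \<Longrightarrow> (f has_real_derivative 0) (at s within {0..})"
  shows "f b = f a"
proof -
  have "f a \<le> f b" using mono_helper[where f = f and f' = "\<lambda>_. 0", OF assms] by simp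
  moreover have "(\<lambda>s. - f s) a \<le> (\<lambda>s. - f s) b"
    using mono_helper[where f = "\<lambda>s. - f s" and f' = "\<lambda>_. 0", OF assms(1,2)] DERIV_minus[OF assms(3)]
    by simp
  ultimately show ?thesis by simp
qed

theorem mainTheorem8:
  fixes phi :: "real \<Rightarrow> real" and kappa :: real
    and x v :: "nat \<Rightarrow> real \<Rightarrow> real"
  assumes phi_nonneg: "\<forall>h\<ge>0. phi h \<ge> 0"
    and phi_bounded: "\<exists>B. \<forall>h\<ge>0. phi h \<le> B"
    and phi_ge1: "\<forall>h. 0 \<le> h \<and> h \<le> 4 \<longrightarrow> phi h \<ge> 1"
    and phi_zero: "\<forall>h>8. phi h = 0"
    and phi_int: "phi integrable_on {0..}"
    and kappa_pos: "kappa > 0"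
    and kappa_le: "kappa \<le> 1 / (8 * integral {0..} phi)"
    and sol: "cs_solution kappa phi 2 x v"
    and init: "x 1 0 = -1" "x 2 0 = 1" "v 1 0 = -1" "v 2 0 = 1"
  shows "filterlim (\<lambda>t. x 2 t - x 1 t) at_top at_top \<and>
         (\<exists>T\<ge>0. \<forall>t\<ge>T. x 2 t - x 1 t > 8 \<and> v 1 t = v 1 T \<and> v 2 t = v 2 T
                       \<and> v 1 T \<noteq> v 2 T)"
proof -
  define I where "I = integral {0..} phi"
  have Ipos: "I > 0"
  proof (rule ccontr)
    assume "\<not> I > 0"
    then have "I \<le> 0" by simp
    then have "1 / (8 * I) \<le> 0" by (simp add: divide_le_0_iff)
    then show False using kappa_le kappa_pos unfolding I_def by linarith
  qed
  have kI: "kappa * I \<le> 1/8"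
    using kappa_le Ipos unfolding I_def[symmetric] by (simp add: field_simps)
  obtain B where B: "\<forall>h\<ge>0. phi h \<le> B" using phi_bounded by blast
  have two: "{1..2::nat} = {1,2}" by auto
  have sol': "\<forall>i\<in>{1,2}. \<forall>t\<ge>0.
        (x i has_real_derivative v i t) (at t within {0..}) \<and>
        (v i has_real_derivative
            (kappa / 2) * (phi \<bar>x i t - x 1 t\<bar> * (v 1 t - v i t) + phi \<bar>x i t - x 2 t\<bar> * (v 2 t - v i t)))
          (at t within {0..})"
    using sol unfolding cs_solution_def two by simp
  define d where "d t = x 2 t - x 1 t" for t
  define w where "w t = v 2 t - v 1 t" for t
  have dd: "(d has_real_derivative w t) (at t within {0..})" if "t \<ge> 0" for t
    unfolding d_def w_def using sol' that by (intro DERIV_diff) auto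
  have dw: "(w has_real_derivative - kappa * phi \<bar>d t\<bar> * w t) (at t within {0..})" if "t \<ge> 0" for t
  proof -
    have "(w has_real_derivative
            (kappa / 2) * (phi \<bar>x 2 t - x 1 t\<bar> * (v 1 t - v 2 t) + phi \<bar>x 2 t - x 2 t\<bar> * (v 2 t - v 2 t))
          - (kappa / 2) * (phi \<bar>x 1 t - x 1 t\<bar> * (v 1 t - v 1 t) + phi \<bar>x 1 t - x 2 t\<bar> * (v 2 t - v 1 t)))
          (at t within {0..})"
      unfolding w_def using sol' that by (intro DERIV_diff) auto
    moreover have "(kappa / 2) * (phi \<bar>x 2 t - x 1 t\<bar> * (v 1 t - v 2 t) + phi \<bar>x 2 t - x 2 t\<bar> * (v 2 t - v 2 t))
          - (kappa / 2) * (phi \<bar>x 1 t - x 1 t\<bar> * (v 1 t - v 1 t) + phi \<bar>x 1 t - x 2 t\<bar> * (v 2 t - v 1 t))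
          = - kappa * phi \<bar>d t\<bar> * w t"
      unfolding d_def w_def by (simp add: abs_minus_commute algebra_simps)
    ultimately show ?thesis by simp
  qed
  have w0: "w 0 = 2" and d0: "d 0 = 2" using init unfolding w_def d_def by auto
  define z where "z t = (w t)^2 * exp (2 * kappa * B * t)" for t
  have dz: "(z has_real_derivative
        2 * kappa * exp (2 * kappa * B * t) * (w t)^2 * (B - phi \<bar>d t\<bar>)) (at t within {0..})"
    if "t \<ge> 0" for t
  proof -
    have "(z has_real_derivative
        (2 * w t * (- kappa * phi \<bar>d t\<bar> * w t)) * exp (2 * kappa * B * t)
          + (w t)^2 * (exp (2 * kappa * B * t) * (2 * kappa * B))) (at t within {0..})"
    proof -
      have a: "((\<lambda>t. (w t)^2) has_real_derivative 2 * w t * (- kappa * phi \<bar>d t\<bar> * w t)) (at t within {0..})"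
        using DERIV_power[OF dw[OF that], of 2] by (simp add: mult_ac)
      have b: "((\<lambda>t. exp (2 * kappa * B * t)) has_real_derivative exp (2 * kappa * B * t) * (2 * kappa * B)) (at t within {0..})"
        by (auto intro!: derivative_eq_intros)
      show ?thesis unfolding z_def by (rule DERIV_cong[OF DERIV_mult[OF a b]]) (simp add: algebra_simps)
    qed
    then show ?thesis by (simp add: algebra_simps power2_eq_square)
  qed
  have zmono: "z 0 \<le> z s" if "s \<ge> 0" for s
  proof (rule mono_helper[where f = z and a = 0 and b = s and f' = "\<lambda>t. 2 * kappa * exp (2 * kappa * B * t) * (w t)^2 * (B - phi \<bar>d t\<bar>)"])
    show "0 \<le> (0::real)" by simp
    show "0 \<le> s" by fact
    show "(z has_real_derivative 2 * kappa * exp (2 * kappa * B * r) * (w r)^2 * (B - phi \<bar>d r\<bar>)) (at r within {0..})"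
      if "r \<in> {0..s}" for r
      using that by (intro dz) simp
    show "0 \<le> 2 * kappa * exp (2 * kappa * B * r) * (w r)^2 * (B - phi \<bar>d r\<bar>)" for r
    proof -
      have "phi \<bar>d r\<bar> \<le> B" using B by simp
      then show ?thesis using kappa_pos by (intro mult_nonneg_nonneg) auto
    qed
  qed
  have z0: "z 0 = 4" by (simp add: z_def w0)
  have wne: "w s \<noteq> 0" if "s \<ge> 0" for s
  proof
    assume "w s = 0"
    then have "z s = 0" by (simp add: z_def)
    then show False using zmono[OF that] z0 by simp
  qed
  have wcont: "continuous_on {0..t} w" if "t \<ge> 0" for t
    by (rule deriv_helper(1)[of 0 t w]) (use that dw in auto)
  have wpos: "w t > 0" if t0: "t \<ge> 0" for t
  proof (rule ccontr)
    assume "\<not> w t > 0"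
    then obtain s where "0 \<le> s" "s \<le> t" "w s = 0"
      using IVT2'[of w t 0 0, OF _ _ t0 wcont[OF t0]] \<open>\<not> w t > 0\<close> w0 by auto
    then show False using wne by blast
  qed
  have dcont: "continuous_on {0..t} d" if "t \<ge> 0" for t
    by (rule deriv_helper(1)[of 0 t d]) (use that dd in auto)
  have dsmono: "d a < d b" if "0 \<le> a" "a < b" for a b
  proof (rule smono_helper[where f = d and f' = w and a = a and b = b])
    show "0 \<le> a" "a < b" by fact+
    show "(d has_real_derivative w r) (at r within {0..})" if "r \<in> {a..b}" for r
      using that \<open>0 \<le> a\<close> by (intro dd) simp
    show "0 < w r" if "a < r" "r < b" for r
      using that \<open>0 \<le> a\<close> by (intro wpos) simp
  qed
  have dmono: "d a \<le> d b" if "0 \<le> a" "a \<le> b" for a b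
    using dsmono[of a b] that by (cases "a = b") auto
  have wlb: "w t \<ge> 15/8" if t0: "t \<ge> 0" for t
  proof -
    have img: "d ` {0..t} = {2..d t}"
    proof
      show "d ` {0..t} \<subseteq> {2..d t}"
      proof
        fix y assume "y \<in> d ` {0..t}"
        then obtain s where "s \<in> {0..t}" "y = d s" by auto
        then show "y \<in> {2..d t}" using dmono[of 0 s] dmono[of s t] d0 by auto
      qed
      show "{2..d t} \<subseteq> d ` {0..t}"
      proof
        fix y assume "y \<in> {2..d t}"
        then obtain s where "0 \<le> s" "s \<le> t" "d s = y"
          using IVT'[of d 0 y t] d0 t0 dcont[OF t0] by auto
        then show "y \<in> d ` {0..t}" by auto
      qed
    qed
    have inj: "inj_on d {0..t}"
    proof (rule inj_onI)
      fix a b assume "a \<in> {0..t}" "b \<in> {0..t}" "d a = d b"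
      then show "a = b" using dsmono[of a b] dsmono[of b a] by (cases a b rule: linorder_cases) auto
    qed
    have phiint: "phi integrable_on {2..d t}"
      by (rule integrable_on_subinterval[OF phi_int]) auto
    have phiabs: "phi absolutely_integrable_on {2..d t}"
      using phiint phi_nonneg by (intro nonnegative_absolutely_integrable_1) auto
    have cv: "integral {0..t} (\<lambda>s. \<bar>w s\<bar> * phi (d s)) = integral {2..d t} phi"
      using has_absolute_integral_change_of_variables_1'[of "{0..t}" d w phi "integral {2..d t} phi"]
        phiabs img inj dd DERIV_subset[of d _ _ "{0..}" "{0..t}"]
      by auto
    have ftc: "((\<lambda>s. - kappa * phi \<bar>d s\<bar> * w s) has_integral (w t - w 0)) {0..t}"
    proof (rule fundamental_theorem_of_calculus[OF t0])
      fix r assume r: "r \<in> {0..t}"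
      have "(w has_real_derivative - kappa * phi \<bar>d r\<bar> * w r) (at r within {0..t})"
        using DERIV_subset[OF dw[of r]] r by auto
      then show "(w has_vector_derivative - kappa * phi \<bar>d r\<bar> * w r) (at r within {0..t})"
        by (simp add: has_real_derivative_iff_has_vector_derivative)
    qed
    have "w t - 2 = integral {0..t} (\<lambda>s. - kappa * phi \<bar>d s\<bar> * w s)"
      using integral_unique[OF ftc] w0 by simp
    also have "\<dots> = integral {0..t} (\<lambda>s. - kappa * (\<bar>w s\<bar> * phi (d s)))"
    proof (rule integral_cong)
      fix s assume "s \<in> {0..t}"
      then have "\<bar>d s\<bar> = d s" "\<bar>w s\<bar> = w s" using dmono[of 0 s] d0 wpos[of s] by auto
      then show "- kappa * phi \<bar>d s\<bar> * w s = - kappa * (\<bar>w s\<bar> * phi (d s))" by simp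
    qed
    also have "\<dots> = - kappa * integral {2..d t} phi"
      using cv by (simp add: integral_mult_right)
    finally have eq: "w t - 2 = - kappa * integral {2..d t} phi" .
    have "integral {2..d t} phi \<le> I"
      unfolding I_def using phiint phi_int phi_nonneg by (intro integral_subset_le) auto
    then have "kappa * integral {2..d t} phi \<le> kappa * I"
      using kappa_pos by (simp add: mult_left_mono)
    then show ?thesis using eq kI by linarith
  qed
  have dlb: "d t \<ge> 2 + 15/8 * t" if t0: "t \<ge> 0" for t
  proof -
    have "(\<lambda>s. d s - 15/8 * s) 0 \<le> (\<lambda>s. d s - 15/8 * s) t"
    proof (rule mono_helper[where f = "\<lambda>s. d s - 15/8 * s" and a = 0 and b = t and f' = "\<lambda>s. w s - 15/8"])
      show "0 \<le> (0::real)" by simp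
      show "0 \<le> t" by fact
      show "((\<lambda>s. d s - 15/8 * s) has_real_derivative w r - 15/8) (at r within {0..})"
        if "r \<in> {0..t}" for r
        using DERIV_diff[OF dd[of r] DERIV_cmult[OF DERIV_ident, of "15/8"]] that by simp
      show "0 \<le> w r - 15/8" if "0 < r" "r < t" for r
        using wlb[of r] that by simp
    qed
    then show ?thesis using d0 by simp
  qed
  have dfun: "(\<lambda>t. x 2 t - x 1 t) = d" by (simp add: d_def fun_eq_iff)
  have lim: "filterlim d at_top at_top"
  proof (rule filterlim_at_top_mono)
    show "filterlim (\<lambda>t::real. 2 + 15/8 * t) at_top at_top"
      by (rule filterlim_tendsto_add_at_top[OF tendsto_const
            filterlim_tendsto_pos_mult_at_top[OF tendsto_const _ filterlim_ident]]) simp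
    show "eventually (\<lambda>t. 2 + 15/8 * t \<le> d t) at_top"
      using eventually_ge_at_top[of "0::real"] by eventually_elim (rule dlb)
  qed
  have d8: "d t > 8" if "t \<ge> 4" for t
    using dlb[of t] that by simp
  have vconst: "v i t = v i 4" if "t \<ge> 4" "i \<in> {1,2}" for t i
  proof (rule const_helper[where f = "v i" and a = 4 and b = t])
    show "0 \<le> (4::real)" "4 \<le> t" using that by auto
    fix s assume s: "s \<in> {4..t}"
    then have "phi \<bar>x 1 s - x 2 s\<bar> = 0" "phi \<bar>x 2 s - x 1 s\<bar> = 0"
      using d8[of s] phi_zero unfolding d_def by (auto simp: abs_minus_commute)
    then have ph: "phi \<bar>x 1 s - x 2 s\<bar> = 0" "phi \<bar>x 2 s - x 1 s\<bar> = 0" .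
    have s0: "s \<ge> 0" using s by simp
    have "(v i has_real_derivative
            (kappa / 2) * (phi \<bar>x i s - x 1 s\<bar> * (v 1 s - v i s) + phi \<bar>x i s - x 2 s\<bar> * (v 2 s - v i s)))
          (at s within {0..})"
      using sol' that(2) s0 by blast
    then show "(v i has_real_derivative 0) (at s within {0..})"
      by (rule DERIV_cong) (use that(2) ph in auto)
  qed
  have Bx: "\<forall>t\<ge>4. x 2 t - x 1 t > 8 \<and> v 1 t = v 1 4 \<and> v 2 t = v 2 4 \<and> v 1 4 \<noteq> v 2 4"
  proof (intro allI impI conjI)
    fix t :: real assume t4: "t \<ge> 4"
    show "x 2 t - x 1 t > 8" using d8[OF t4] unfolding d_def .
    show "v 1 t = v 1 4" using vconst[OF t4, of 1] by simp
    show "v 2 t = v 2 4" using vconst[OF t4, of 2] by simp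
    show "v 1 4 \<noteq> v 2 4" using wpos[of 4] unfolding w_def by simp
  qed
  have A: "filterlim (\<lambda>t. x 2 t - x 1 t) at_top at_top" using lim unfolding dfun .
  show ?thesis
  proof (rule conjI[OF A])
    show "\<exists>T\<ge>0. \<forall>t\<ge>T. x 2 t - x 1 t > 8 \<and> v 1 t = v 1 T \<and> v 2 t = v 2 T \<and> v 1 T \<noteq> v 2 T"
    proof (rule exI[of _ "4::real"], rule conjI)
      show "(0::real) \<le> 4" by simp
      show "\<forall>t\<ge>4. x 2 t - x 1 t > 8 \<and> v 1 t = v 1 4 \<and> v 2 t = v 2 4 \<and> v 1 4 \<noteq> v 2 4" by (rule Bx)
    qed
  qed
qed
end
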